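(* Suppose a group $G$ acts faithfully by order-preserving bijections on a totally ordered set $(\Omega,\le)$. Then the action has no crossings if and only if every left-ordering of $G$ induced from the action (with respect to any well-order on $\Omega$) is Conradian.
   Context: A crossing for the action is a 5-tuple $(f,g,u,v,w)$ with $f,g\in G$, $u,v,w\in\Omega$ such that: $u<w<v$; $g^nu<v$ and $f^nv>u$ for every $n\in\mathbb{N}$; and $f^Nv<w<g^Mu$ for some $M,N\in\mathbb{N}$. Given a well-order $\le^*$ on $\Omega$, the induced ordering $\preceq$ on $G$ is defined as follows: for $f\neq id$ let $w_f=\min_{\le^*}\{w\in\Omega: f(w)\neq w\}$, and declare $f\succ id$ iff $f(w_f)>w_f$; this is a left-ordering. A left-ordering is Conradian if for all $f\succ id$, $g\succ id$ there is $n\in\mathbb{N}$ with $fg^n\succ g$. *)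

theory Defs
  imports "HOL-Algebra.Group_Action"
begin

definition crossing :: "('g, 'b) monoid_scheme \<Rightarrow> ('g \<Rightarrow> 'a::linorder \<Rightarrow> 'a) \<Rightarrow> 'g \<Rightarrow> 'g \<Rightarrow> 'a \<Rightarrow> 'a \<Rightarrow> 'a \<Rightarrow> bool" where
  "crossing G \<phi> f g u v w \<longleftrightarrow>
     f \<in> carrier G \<and> g \<in> carrier G \<and> u < w \<and> w < v \<and>
     (\<forall>n::nat. \<phi> (g [^]\<^bsub>G\<^esub> n) u < v \<and> \<phi> (f [^]\<^bsub>G\<^esub> n) v > u) \<and>
     (\<exists>(M::nat) (N::nat). \<phi> (f [^]\<^bsub>G\<^esub> N) v < w \<and> w < \<phi> (g [^]\<^bsub>G\<^esub> M) u)"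

definition has_crossing :: "('g, 'b) monoid_scheme \<Rightarrow> ('g \<Rightarrow> 'a::linorder \<Rightarrow> 'a) \<Rightarrow> bool" where
  "has_crossing G \<phi> \<longleftrightarrow> (\<exists>f g u v w. crossing G \<phi> f g u v w)"

definition least_moved :: "('g \<Rightarrow> 'a \<Rightarrow> 'a) \<Rightarrow> 'a rel \<Rightarrow> 'g \<Rightarrow> 'a" where
  "least_moved \<phi> r f = (THE w. \<phi> f w \<noteq> w \<and> (\<forall>y. \<phi> f y \<noteq> y \<longrightarrow> (w, y) \<in> r))"

definition induced_pos :: "('g, 'b) monoid_scheme \<Rightarrow> ('g \<Rightarrow> 'a::linorder \<Rightarrow> 'a) \<Rightarrow> 'a rel \<Rightarrow> 'g \<Rightarrow> bool" where
  "induced_pos G \<phi> r f \<longleftrightarrow> f \<in> carrier G \<and> f \<noteq> \<one>\<^bsub>G\<^esub> \<and>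
     \<phi> f (least_moved \<phi> r f) > least_moved \<phi> r f"

definition induced_less :: "('g, 'b) monoid_scheme \<Rightarrow> ('g \<Rightarrow> 'a::linorder \<Rightarrow> 'a) \<Rightarrow> 'a rel \<Rightarrow> 'g \<Rightarrow> 'g \<Rightarrow> bool" where
  "induced_less G \<phi> r g f \<longleftrightarrow> g \<in> carrier G \<and> f \<in> carrier G \<and>
     induced_pos G \<phi> r (inv\<^bsub>G\<^esub> g \<otimes>\<^bsub>G\<^esub> f)"

definition conradian :: "('g, 'b) monoid_scheme \<Rightarrow> ('g \<Rightarrow> 'g \<Rightarrow> bool) \<Rightarrow> bool" where
  "conradian G lt \<longleftrightarrow>
     (\<forall>f\<in>carrier G. \<forall>g\<in>carrier G. lt \<one>\<^bsub>G\<^esub> f \<and> lt \<one>\<^bsub>G\<^esub> g \<longrightarrow>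
        (\<exists>n::nat. n \<ge> 1 \<and> lt g (f \<otimes>\<^bsub>G\<^esub> g [^]\<^bsub>G\<^esub> n)))"

end

theory Submission imports Defs begin

lemma wo_facts:
  assumes "Well_order r" "Field r = UNIV"
  shows "(x,x) \<in> r" "x \<noteq> y \<Longrightarrow> (x,y) \<in> r \<or> (y,x) \<in> r"
    "(x,y) \<in> r \<Longrightarrow> (y,x) \<in> r \<Longrightarrow> x = y" "wf (r - Id)"
    "(x,y) \<in> r \<Longrightarrow> (y,z) \<in> r \<Longrightarrow> (x,z) \<in> r"
  using assms unfolding well_order_on_def linear_order_on_def partial_order_on_def
    preorder_on_def refl_on_def antisym_def total_on_def trans_def by blast+

lemma lm_eq:
  assumes wo: "Well_order r" "Field r = UNIV"
    and mv: "\<phi> h m \<noteq> m" and fx: "\<forall>y. (y,m) \<in> r \<and> y \<noteq> m \<longrightarrow> \<phi> h y = y"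
  shows "least_moved \<phi> r h = m"
proof -
  have P: "\<forall>y. \<phi> h y \<noteq> y \<longrightarrow> (m, y) \<in> r"
  proof (intro allI impI)
    fix y assume "\<phi> h y \<noteq> y"
    then show "(m, y) \<in> r"
      using wo_facts(1)[OF wo, of m] wo_facts(2)[OF wo, of m y] fx by (cases "y = m") auto
  qed
  show ?thesis unfolding least_moved_def
  proof (rule the_equality)
    show "\<phi> h m \<noteq> m \<and> (\<forall>y. \<phi> h y \<noteq> y \<longrightarrow> (m, y) \<in> r)" using mv P by blast
  next
    fix w assume "\<phi> h w \<noteq> w \<and> (\<forall>y. \<phi> h y \<noteq> y \<longrightarrow> (w, y) \<in> r)"
    then show "w = m" using P mv wo_facts(3)[OF wo] by blast
  qed
qed

lemma lm_min:
  assumes wo: "Well_order r" "Field r = UNIV" and mv: "\<phi> h x \<noteq> x"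
  shows "\<phi> h (least_moved \<phi> r h) \<noteq> least_moved \<phi> r h \<and>
    (\<forall>y. (y, least_moved \<phi> r h) \<in> r \<and> y \<noteq> least_moved \<phi> r h \<longrightarrow> \<phi> h y = y)"
proof -
  obtain z where z: "z \<in> {y. \<phi> h y \<noteq> y}" and zm: "\<And>y. (y,z) \<in> r - Id \<Longrightarrow> y \<notin> {y. \<phi> h y \<noteq> y}"
    using wfE_min[OF wo_facts(4)[OF wo], of x "{y. \<phi> h y \<noteq> y}"] mv by blast
  have fx: "\<forall>y. (y,z) \<in> r \<and> y \<noteq> z \<longrightarrow> \<phi> h y = y" using zm by blast
  have "least_moved \<phi> r h = z" using lm_eq[OF wo, of \<phi> h z] z fx by blast
  then show ?thesis using z fx by simp
qed

locale oact = group_action G "UNIV::'a::linorder set" \<phi>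
  for G :: "('g,'b) monoid_scheme" (structure) and \<phi> :: "'g \<Rightarrow> 'a::linorder \<Rightarrow> 'a" +
  assumes faith: "inj_on \<phi> (carrier G)" and mon: "\<forall>g\<in>carrier G. mono (\<phi> g)"
begin

lemma grp: "group G" using group_hom group_hom.axioms(1) by auto

sublocale group G by (rule grp)

lemma comp: "g \<in> carrier G \<Longrightarrow> h \<in> carrier G \<Longrightarrow> \<phi> (g \<otimes> h) x = \<phi> g (\<phi> h x)"
  using composition_rule by blast

lemma one: "\<phi> \<one> x = x"
  using fun_cong[OF id_eq_one, of x] by simp

lemma invl: "g \<in> carrier G \<Longrightarrow> \<phi> (inv g) (\<phi> g x) = x"
  using orbit_sym_aux by blast

lemma invr: "g \<in> carrier G \<Longrightarrow> \<phi> g (\<phi> (inv g) x) = x"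
  using orbit_sym_aux[of "inv g" x] by simp

lemma less_iff: assumes g: "g \<in> carrier G" shows "\<phi> g x < \<phi> g y \<longleftrightarrow> x < y"
proof
  assume lt: "\<phi> g x < \<phi> g y"
  show "x < y"
  proof (rule ccontr)
    assume "\<not> x < y"
    then have "y \<le> x" by simp
    then have "\<phi> g y \<le> \<phi> g x" by (rule monoD[OF mon[rule_format, OF g]])
    then show False using lt by simp
  qed
next
  assume lt: "x < y"
  then have le: "\<phi> g x \<le> \<phi> g y" by (intro monoD[OF mon[rule_format, OF g]]) simp
  have "\<phi> g x \<noteq> \<phi> g y"
  proof
    assume "\<phi> g x = \<phi> g y"
    then have "\<phi> (inv g) (\<phi> g x) = \<phi> (inv g) (\<phi> g y)" by simp
    then have "x = y" using invl[OF g, of x] invl[OF g, of y] by simp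
    then show False using lt by simp
  qed
  then show "\<phi> g x < \<phi> g y" using le by simp
qed

lemma le_iff: "g \<in> carrier G \<Longrightarrow> \<phi> g x \<le> \<phi> g y \<longleftrightarrow> x \<le> y"
  using less_iff by (meson linorder_not_less)

lemma pow_Suc: assumes g: "g \<in> carrier G" shows "\<phi> (g [^] Suc n) x = \<phi> (g [^] n) (\<phi> g x)"
proof -
  have "g [^] Suc n = g [^] n \<otimes> g" by (rule nat_pow_Suc)
  then show ?thesis by (simp only:) (rule comp[OF nat_pow_closed[OF g] g])
qed

lemma pow_add: assumes g: "g \<in> carrier G" shows "\<phi> (g [^] ((m::nat) + n)) x = \<phi> (g [^] m) (\<phi> (g [^] n) x)"
proof -
  have "g [^] (m + n) = g [^] m \<otimes> g [^] n" by (rule nat_pow_mult[OF g, symmetric])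
  then show ?thesis by (simp only:) (rule comp[OF nat_pow_closed[OF g] nat_pow_closed[OF g]])
qed

lemma pow1: assumes g: "g \<in> carrier G" shows "\<phi> (g [^] (1::nat)) x = \<phi> g x"
proof -
  have "g [^] (1::nat) = g" using g by simp
  then show ?thesis by simp
qed

lemma pow_ge: "g \<in> carrier G \<Longrightarrow> \<phi> g m \<ge> m \<Longrightarrow> \<phi> (g [^] (k::nat)) m \<ge> m"
proof (induction k)
  case 0 then show ?case by (simp add: one)
next
  case (Suc k)
  have "\<phi> (g [^] k) (\<phi> g m) \<ge> \<phi> (g [^] k) m" using Suc.prems le_iff[of "g [^] k"] by simp
  moreover have "\<phi> (g [^] Suc k) m = \<phi> (g [^] k) (\<phi> g m)" by (rule pow_Suc[OF Suc.prems(1)])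
  ultimately show ?case using Suc.IH Suc.prems by simp
qed

lemma pow_fix: "g \<in> carrier G \<Longrightarrow> \<phi> g y = y \<Longrightarrow> \<phi> (g [^] (k::nat)) y = y"
  by (induction k) (simp_all add: one comp)

lemma pow_mono: "g \<in> carrier G \<Longrightarrow> \<phi> g m > m \<Longrightarrow> j < k \<Longrightarrow> \<phi> (g [^] (j::nat)) m < \<phi> (g [^] k) m"
proof (induction k)
  case 0 then show ?case by simp
next
  case (Suc k)
  have "\<phi> (g [^] k) m < \<phi> (g [^] k) (\<phi> g m)" using Suc.prems less_iff[of "g [^] k"] by simp
  moreover have "\<phi> (g [^] Suc k) m = \<phi> (g [^] k) (\<phi> g m)" by (rule pow_Suc[OF Suc.prems(1)])
  ultimately show ?case using Suc.IH Suc.prems by (metis less_Suc_eq order.strict_trans)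
qed


lemma pos_at:
  assumes wo: "Well_order r" "Field r = UNIV" and h: "h \<in> carrier G"
    and fx: "\<forall>y. (y,m) \<in> r \<and> y \<noteq> m \<longrightarrow> \<phi> h y = y" and up: "\<phi> h m > m"
  shows "induced_pos G \<phi> r h"
proof -
  have mv: "\<phi> h m \<noteq> m" using up by simp
  have lm: "least_moved \<phi> r h = m" using lm_eq[OF wo, of \<phi> h m] mv fx by blast
  have "h \<noteq> \<one>" using mv one[of m] by auto
  then show ?thesis unfolding induced_pos_def using h lm up by simp
qed

lemma neg_at:
  assumes wo: "Well_order r" "Field r = UNIV"
    and fx: "\<forall>y. (y,m) \<in> r \<and> y \<noteq> m \<longrightarrow> \<phi> h y = y" and dn: "\<phi> h m < m"
  shows "\<not> induced_pos G \<phi> r h"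
proof -
  have mv: "\<phi> h m \<noteq> m" using dn by simp
  have lm: "least_moved \<phi> r h = m" using lm_eq[OF wo, of \<phi> h m] mv fx by blast
  then show ?thesis unfolding induced_pos_def using dn less_asym by auto
qed

lemma lt_one: "f \<in> carrier G \<Longrightarrow> induced_less G \<phi> r \<one> f \<longleftrightarrow> induced_pos G \<phi> r f"
  unfolding induced_less_def by simp

lemma dirA:
  assumes wo: "Well_order r" "Field r = UNIV" and nc: "\<not> has_crossing G \<phi>"
  shows "conradian G (induced_less G \<phi> r)"
  unfolding conradian_def
proof (intro ballI impI)
  fix f g assume f: "f \<in> carrier G" and g: "g \<in> carrier G"
    and pos: "induced_less G \<phi> r \<one> f \<and> induced_less G \<phi> r \<one> g"
  have pf: "induced_pos G \<phi> r f" and pg: "induced_pos G \<phi> r g" using pos lt_one f g by auto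
  define p where "p = least_moved \<phi> r f"
  define q where "q = least_moved \<phi> r g"
  have fp: "\<phi> f p > p" using pf unfolding induced_pos_def p_def by simp
  have gq: "\<phi> g q > q" using pg unfolding induced_pos_def q_def by simp
  have fixp: "\<forall>y. (y,p) \<in> r \<and> y \<noteq> p \<longrightarrow> \<phi> f y = y"
    using lm_min[OF wo, of \<phi> f p] fp unfolding p_def by (metis less_irrefl)
  have fixq: "\<forall>y. (y,q) \<in> r \<and> y \<noteq> q \<longrightarrow> \<phi> g y = y"
    using lm_min[OF wo, of \<phi> g q] gq unfolding q_def by (metis less_irrefl)
  define m where "m = (if (p,q) \<in> r then p else q)"
  have mp: "(m,p) \<in> r" and mq: "(m,q) \<in> r"
    using wo_facts(1)[OF wo, of p] wo_facts(1)[OF wo, of q] wo_facts(2)[OF wo, of p q]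
    unfolding m_def by auto
  have ffix: "\<forall>y. (y,m) \<in> r \<and> y \<noteq> m \<longrightarrow> \<phi> f y = y"
  proof (intro allI impI)
    fix y assume y: "(y,m) \<in> r \<and> y \<noteq> m"
    then have "(y,p) \<in> r" using wo_facts(5)[OF wo] mp by blast
    moreover have "y \<noteq> p" using y mp wo_facts(3)[OF wo] by blast
    ultimately show "\<phi> f y = y" using fixp by blast
  qed
  have gfix: "\<forall>y. (y,m) \<in> r \<and> y \<noteq> m \<longrightarrow> \<phi> g y = y"
  proof (intro allI impI)
    fix y assume y: "(y,m) \<in> r \<and> y \<noteq> m"
    then have "(y,q) \<in> r" using wo_facts(5)[OF wo] mq by blast
    moreover have "y \<noteq> q" using y mq wo_facts(3)[OF wo] by blast
    ultimately show "\<phi> g y = y" using fixq by blast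
  qed
  have fm: "\<phi> f m \<ge> m"
  proof (cases "m = p")
    case True then show ?thesis using fp by simp
  next
    case False then show ?thesis using fixp mp by simp
  qed
  have gm: "\<phi> g m \<ge> m"
  proof (cases "m = q")
    case True then show ?thesis using gq by simp
  next
    case False then show ?thesis using fixq mq by simp
  qed
  define h where "h = (\<lambda>n::nat. inv g \<otimes> (f \<otimes> g [^] n))"
  have hc: "\<And>n. h n \<in> carrier G" unfolding h_def using f g by simp
  have hval: "\<And>n x. \<phi> (h n) x = \<phi> (inv g) (\<phi> f (\<phi> (g [^] n) x))"
    unfolding h_def using f g by (simp add: comp)
  have hfix: "\<And>n. \<forall>y. (y,m) \<in> r \<and> y \<noteq> m \<longrightarrow> \<phi> (h n) y = y"
  proof (intro allI impI)
    fix n :: nat and y assume y: "(y,m) \<in> r \<and> y \<noteq> m"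
    have gy: "\<phi> g y = y" using gfix y by blast
    have a1: "\<phi> (g [^] n) y = y" by (rule pow_fix[OF g gy])
    have a2: "\<phi> f y = y" using ffix y by blast
    have a3: "\<phi> (inv g) y = y" using invl[OF g, of y] gy by (simp only:)
    have "\<phi> (h n) y = \<phi> (inv g) (\<phi> f (\<phi> (g [^] n) y))" by (rule hval)
    also have "\<dots> = y" by (simp only: a1 a2 a3)
    finally show "\<phi> (h n) y = y" .
  qed
  have hpos: "\<And>n. \<phi> (h n) m > m \<Longrightarrow> induced_pos G \<phi> r (h n)"
    using pos_at[OF wo hc hfix] .
  show "\<exists>n::nat. n \<ge> 1 \<and> induced_less G \<phi> r g (f \<otimes> g [^] n)"
  proof (rule ccontr)
    assume H0: "\<not> (\<exists>n::nat. n \<ge> 1 \<and> induced_less G \<phi> r g (f \<otimes> g [^] n))"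
    have H: "\<And>n. n \<ge> 1 \<Longrightarrow> \<not> induced_pos G \<phi> r (h n)"
    proof -
      fix n :: nat assume n: "n \<ge> 1"
      have fc: "f \<otimes> g [^] n \<in> carrier G" using f g by simp
      from H0 n have "\<not> induced_less G \<phi> r g (f \<otimes> g [^] n)" by blast
      then show "\<not> induced_pos G \<phi> r (h n)" using g fc unfolding induced_less_def h_def by simp
    qed
    have ginvm: "\<phi> (inv g) (\<phi> g m) = m" by (rule invl[OF g])
    show False
    proof (cases "\<phi> g m = m")
      case True
      then have "m \<noteq> q" using gq by auto
      then have "m = p" unfolding m_def by auto
      then have fmm: "\<phi> f m > m" using fp by simp
      have ginv: "\<phi> (inv g) m = m" using ginvm True by simp
      have "\<phi> (h 1) m = \<phi> (inv g) (\<phi> f m)" using hval pow1[OF g] True by simp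
      also have "\<dots> > \<phi> (inv g) m" using less_iff[of "inv g"] g fmm by simp
      finally have "\<phi> (h 1) m > m" using ginv by simp
      then show False using hpos H by blast
    next
      case False
      then have gm': "\<phi> g m > m" using gm by simp
      define Gm where "Gm = (\<lambda>n::nat. \<phi> (g [^] n) m)"
      have Gmono: "\<And>j k. j < k \<Longrightarrow> Gm j < Gm k" unfolding Gm_def using pow_mono[OF g gm'] by blast
      have Gm1: "Gm 1 = \<phi> g m" unfolding Gm_def by (rule pow1[OF g])
      have Gm0: "Gm 0 = m" unfolding Gm_def by (simp add: one)
      have le: "\<And>n. n \<ge> 1 \<Longrightarrow> \<phi> f (Gm n) \<le> \<phi> g m"
      proof (rule ccontr)
        fix n :: nat assume n: "n \<ge> 1" and "\<not> \<phi> f (Gm n) \<le> \<phi> g m"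
        then have "\<phi> f (Gm n) > \<phi> g m" by simp
        then have "\<phi> (inv g) (\<phi> f (Gm n)) > \<phi> (inv g) (\<phi> g m)" using less_iff[of "inv g"] g by simp
        then have "\<phi> (h n) m > m" using hval ginvm unfolding Gm_def by simp
        then show False using hpos H n by blast
      qed
      have lt: "\<And>n. n \<ge> 1 \<Longrightarrow> \<phi> f (Gm n) < \<phi> g m"
      proof -
        fix n :: nat assume n: "n \<ge> 1"
        show "\<phi> f (Gm n) < \<phi> g m"
        proof (rule ccontr)
          assume "\<not> \<phi> f (Gm n) < \<phi> g m"
          then have eq: "\<phi> f (Gm n) = \<phi> g m" using le[OF n] by simp
          have "\<phi> f (Gm n) < \<phi> f (Gm (Suc n))" using less_iff[OF f] Gmono[of n "Suc n"] by simp
          then show False using eq le[of "Suc n"] n by simp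
        qed
      qed
      have all: "\<And>n. \<phi> f (Gm n) < \<phi> g m"
      proof -
        fix n show "\<phi> f (Gm n) < \<phi> g m"
        proof (cases "n = 0")
          case True
          have "\<phi> f (Gm 0) < \<phi> f (Gm 1)" using less_iff[OF f] Gmono[of 0 1] by simp
          then show ?thesis using True lt[of 1] by simp
        next
          case False then show ?thesis using lt by simp
        qed
      qed
      define w where "w = \<phi> g m"
      define v where "v = \<phi> (inv f) w"
      have fv: "\<phi> f v = w" unfolding v_def by (rule invr[OF f])
      have fw: "\<phi> f w < w" using all[of 1] Gm1 unfolding w_def by simp
      have wv: "w < v" using less_iff[OF f, of w v] fw fv by simp
      have mw: "m < w" using gm' unfolding w_def by simp
      have c1: "\<forall>n::nat. \<phi> (g [^] n) m < v \<and> \<phi> (f [^] n) v > m"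
      proof
        fix n :: nat
        have "\<phi> f (Gm n) < \<phi> f v" using all[of n] fv unfolding w_def by simp
        then have A: "\<phi> (g [^] n) m < v" using less_iff[OF f] unfolding Gm_def by simp
        have B: "\<phi> (f [^] n) v > m"
        proof (cases n)
          case 0 then show ?thesis using mw wv by (simp add: one)
        next
          case (Suc k)
          have "\<phi> (f [^] n) v = \<phi> (f [^] k) w" using pow_Suc[OF f, of k v] fv Suc by simp
          moreover have "\<phi> (f [^] k) w > \<phi> (f [^] k) m" using less_iff[of "f [^] k"] f mw by simp
          moreover have "\<phi> (f [^] k) m \<ge> m" by (rule pow_ge[OF f fm])
          ultimately show ?thesis by simp
        qed
        show "\<phi> (g [^] n) m < v \<and> \<phi> (f [^] n) v > m" using A B by simp
      qed
      have c2: "\<phi> (f [^] Suc (Suc 0)) v < w"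
        using pow_Suc[OF f, of "Suc 0" v] pow1[OF f] fv fw by simp
      have c3: "w < \<phi> (g [^] Suc (Suc 0)) m"
        using Gmono[of 1 "Suc (Suc 0)"] Gm1 unfolding Gm_def w_def by simp
      have "crossing G \<phi> f g m v w"
        unfolding crossing_def using f g mw wv c1 c2 c3 by blast
      then show False using nc unfolding has_crossing_def by blast
    qed
  qed
qed


lemma exists_wo_first:
  fixes w :: 'a
  shows "\<exists>r::'a rel. Well_order r \<and> Field r = UNIV \<and> (\<forall>y. (y,w) \<in> r \<longrightarrow> y = w)"
proof -
  obtain r0 :: "'a rel" where r0: "well_order_on UNIV r0" using well_order_on by blast
  have R: "refl_on UNIV r0" "trans r0" "antisym r0" "total_on UNIV r0" "wf (r0 - Id)"
    using r0 unfolding well_order_on_def linear_order_on_def partial_order_on_def preorder_on_def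
    by blast+
  define r where "r = {(x,y). x = w \<or> (y \<noteq> w \<and> (x,y) \<in> r0)}"
  have lin: "linear_order_on UNIV r"
    using R unfolding r_def order_on_defs refl_on_def trans_def antisym_def total_on_def
    by auto
  have "r - Id \<subseteq> inv_image (less_than <*lex*> (r0 - Id)) (\<lambda>x. (if x = w then 0::nat else 1, x))"
    unfolding r_def by (auto split: if_splits)
  then have "wf (r - Id)"
    using wf_subset[OF wf_inv_image[OF wf_lex_prod[OF wf_less_than R(5)]]] by blast
  then have "well_order_on UNIV r" using lin unfolding well_order_on_def by blast
  then have "Well_order r \<and> Field r = UNIV" using well_order_on_Well_order by metis
  moreover have "\<forall>y. (y,w) \<in> r \<longrightarrow> y = w" unfolding r_def by auto
  ultimately show ?thesis by blast
qed

lemma dirB: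
  assumes hc: "has_crossing G \<phi>"
  shows "\<exists>r. Well_order r \<and> Field r = UNIV \<and> \<not> conradian G (induced_less G \<phi> r)"
proof -
  obtain f g u v w where cr: "crossing G \<phi> f g u v w" using hc unfolding has_crossing_def by blast
  then have f: "f \<in> carrier G" and g: "g \<in> carrier G" and uw: "u < w" and wv: "w < v"
    and gn: "\<And>n::nat. \<phi> (g [^] n) u < v" and fn: "\<And>n::nat. \<phi> (f [^] n) v > u"
    unfolding crossing_def by blast+
  obtain M N :: nat where fN: "\<phi> (f [^] N) v < w" and gM: "w < \<phi> (g [^] M) u"
    using cr unfolding crossing_def by blast
  obtain r where wo: "Well_order r" "Field r = UNIV" and first: "\<forall>y. (y,w) \<in> r \<longrightarrow> y = w"
    using exists_wo_first[of w] by blast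
  have fx: "\<And>h. \<forall>y. (y,w) \<in> r \<and> y \<noteq> w \<longrightarrow> \<phi> h y = y" using first by blast
  define a where "a = g [^] M \<otimes> f [^] N"
  define b where "b = g [^] M"
  have fNc: "f [^] N \<in> carrier G" and gMc: "g [^] M \<in> carrier G" using f g by simp_all
  have ac: "a \<in> carrier G" and bc: "b \<in> carrier G" unfolding a_def b_def using fNc gMc by simp_all
  have fw: "\<phi> (f [^] N) w > u"
  proof -
    have "\<phi> (f [^] N) (\<phi> (f [^] N) v) < \<phi> (f [^] N) w" using less_iff[OF fNc] fN by simp
    moreover have "\<phi> (f [^] N) (\<phi> (f [^] N) v) = \<phi> (f [^] (N + N)) v" using pow_add[OF f, of N N v] by simp
    moreover have "\<phi> (f [^] (N + N)) v > u" by (rule fn)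
    ultimately show ?thesis by simp
  qed
  have aw: "\<phi> a w > w"
  proof -
    have "\<phi> a w = \<phi> (g [^] M) (\<phi> (f [^] N) w)" unfolding a_def by (rule comp[OF gMc fNc])
    moreover have "\<phi> (g [^] M) (\<phi> (f [^] N) w) > \<phi> (g [^] M) u" using less_iff[OF gMc] fw by simp
    ultimately show ?thesis using gM by simp
  qed
  have bw: "\<phi> b w > w"
  proof -
    have "\<phi> (g [^] M) w > \<phi> (g [^] M) u" using less_iff[OF gMc] uw by simp
    then show ?thesis unfolding b_def using gM by simp
  qed
  have pa: "induced_less G \<phi> r \<one> a" using lt_one[OF ac] pos_at[OF wo ac fx aw] by simp
  have pb: "induced_less G \<phi> r \<one> b" using lt_one[OF bc] pos_at[OF wo bc fx bw] by simp
  have neg: "\<And>n::nat. \<not> induced_less G \<phi> r b (a \<otimes> b [^] n)"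
  proof
    fix n :: nat
    assume H: "induced_less G \<phi> r b (a \<otimes> b [^] n)"
    define h where "h = inv b \<otimes> (a \<otimes> b [^] n)"
    have bn: "b [^] n = g [^] (M * n)" unfolding b_def by (rule nat_pow_pow[OF g])
    have bnc: "b [^] n \<in> carrier G" using bc by simp
    have x1: "\<phi> (b [^] n) w < v"
    proof -
      have "\<phi> (g [^] (M * n)) w < \<phi> (g [^] (M * n)) (\<phi> (g [^] M) u)"
        using less_iff[of "g [^] (M * n)"] g gM by simp
      moreover have "\<phi> (g [^] (M * n)) (\<phi> (g [^] M) u) = \<phi> (g [^] (M * n + M)) u"
        using pow_add[OF g, of "M * n" M u] by simp
      ultimately show ?thesis using bn gn[of "M * n + M"] by simp
    qed
    have "\<phi> h w = \<phi> (inv b) (\<phi> a (\<phi> (b [^] n) w))"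
      unfolding h_def using bc ac bnc by (simp add: comp)
    also have "\<dots> = \<phi> (inv b) (\<phi> b (\<phi> (f [^] N) (\<phi> (b [^] n) w)))"
      unfolding a_def b_def using comp[OF gMc fNc] by simp
    also have "\<dots> = \<phi> (f [^] N) (\<phi> (b [^] n) w)" by (rule invl[OF bc])
    also have "\<dots> < \<phi> (f [^] N) v" using less_iff[OF fNc] x1 by simp
    finally have "\<phi> h w < w" using fN by simp
    then have "\<not> induced_pos G \<phi> r h" using neg_at[OF wo fx] by blast
    then show False using H unfolding induced_less_def h_def by simp
  qed
  have "\<not> conradian G (induced_less G \<phi> r)"
  proof
    assume "conradian G (induced_less G \<phi> r)"
    then obtain n :: nat where "induced_less G \<phi> r b (a \<otimes> b [^] n)"
      using ac bc pa pb unfolding conradian_def by blast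
    then show False using neg by blast
  qed
  then show ?thesis using wo by blast
qed

end

theorem mainTheorem17:
  fixes G :: "('g, 'b) monoid_scheme" and \<phi> :: "'g \<Rightarrow> 'a::linorder \<Rightarrow> 'a"
  assumes "group_action G UNIV \<phi>"
    and "inj_on \<phi> (carrier G)"
    and "\<forall>g\<in>carrier G. mono (\<phi> g)"
  shows "\<not> has_crossing G \<phi> \<longleftrightarrow>
    (\<forall>r :: 'a rel. Well_order r \<and> Field r = UNIV \<longrightarrow> conradian G (induced_less G \<phi> r))"
proof -
  interpret oact G \<phi> unfolding oact_def oact_axioms_def using assms by blast
  show ?thesis using dirA dirB by blast
qed

end
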